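(* Let $Y$ be a real Banach space. The norm of $Y$ is Gâteaux differentiable (at every nonzero point) if and only if every closed linear subspace $X$ of $Y$ has property wU in $Y$.
   Context: A closed subspace $X$ of a Banach space $Y$ has property wU in $Y$ if every norm-attaining functional $x^*\in X^*$ (i.e. $x^*(x)=\|x^*\|$ for some $x$ in the unit sphere of $X$) has a unique Hahn–Banach extension to $Y$, i.e. there is exactly one $y^*\in Y^*$ with $y^*|_X=x^*$ and $\|y^*\|=\|x^*\|$. *)

theory Defs
  imports "HOL-Analysis.Analysis"
begin

text \<open>A bounded linear functional on the subspace X (values outside X are irrelevant).\<close>
definition functional_on :: "'a::real_normed_vector set \<Rightarrow> ('a \<Rightarrow> real) \<Rightarrow> bool" where
  "functional_on X f \<longleftrightarrow>
     (\<forall>x\<in>X. \<forall>y\<in>X. f (x + y) = f x + f y) \<and>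
     (\<forall>c. \<forall>x\<in>X. f (c *\<^sub>R x) = c * f x) \<and>
     (\<exists>K. \<forall>x\<in>X. \<bar>f x\<bar> \<le> K * norm x)"

definition fnorm_on :: "'a::real_normed_vector set \<Rightarrow> ('a \<Rightarrow> real) \<Rightarrow> real" where
  "fnorm_on X f = Sup ((\<lambda>x. \<bar>f x\<bar>) ` {x\<in>X. norm x \<le> 1})"

definition norm_attaining_on :: "'a::real_normed_vector set \<Rightarrow> ('a \<Rightarrow> real) \<Rightarrow> bool" where
  "norm_attaining_on X f \<longleftrightarrow> (\<exists>x\<in>X. norm x = 1 \<and> f x = fnorm_on X f)"

definition HB_extensions :: "'a::real_normed_vector set \<Rightarrow> ('a \<Rightarrow> real) \<Rightarrow> ('a \<Rightarrow> real) set" where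
  "HB_extensions X f = {g. bounded_linear g \<and> (\<forall>x\<in>X. g x = f x) \<and> onorm g = fnorm_on X f}"

definition property_wU :: "'a::real_normed_vector set \<Rightarrow> bool" where
  "property_wU X \<longleftrightarrow>
     (\<forall>f. functional_on X f \<and> norm_attaining_on X f \<longrightarrow> (\<exists>!g. g \<in> HB_extensions X f))"

definition gateaux_differentiable_at :: "('a::real_normed_vector \<Rightarrow> real) \<Rightarrow> 'a \<Rightarrow> bool" where
  "gateaux_differentiable_at F x \<longleftrightarrow>
     (\<exists>L. bounded_linear L \<and> (\<forall>h. ((\<lambda>t. F (x + t *\<^sub>R h)) has_real_derivative L h) (at 0)))"

end

theory Submission
  imports Defs
begin

lemma functional_zero:
  assumes "functional_on X f" "subspace X"
  shows "f 0 = 0"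
proof -
  have "0 \<in> X" using assms(2) by (simp add: subspace_0)
  then have "f (0 *\<^sub>R 0) = 0 * f 0" using assms(1) unfolding functional_on_def by blast
  then show ?thesis by simp
qed

lemma fnorm_bound:
  assumes f: "functional_on X f" and X: "subspace X" and x: "x \<in> X"
  shows "\<bar>f x\<bar> \<le> fnorm_on X f * norm x" and "0 \<le> fnorm_on X f"
proof -
  obtain K where K: "\<forall>x\<in>X. \<bar>f x\<bar> \<le> K * norm x" using f unfolding functional_on_def by blast
  let ?S = "(\<lambda>x. \<bar>f x\<bar>) ` {x\<in>X. norm x \<le> 1}"
  have bdd: "bdd_above ?S"
  proof (rule bdd_aboveI)
    fix z assume "z \<in> ?S"
    then obtain w where w: "w \<in> X" "norm w \<le> 1" "z = \<bar>f w\<bar>" by auto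
    have "\<bar>f w\<bar> \<le> K * norm w" using K w by blast
    also have "\<dots> \<le> \<bar>K\<bar>"
      by (metis abs_ge_self abs_mult mult.commute mult_left_le_one_le norm_ge_zero order.trans abs_norm_cancel abs_ge_zero w(2))
    finally show "z \<le> \<bar>K\<bar>" using w by simp
  qed
  have z0: "0 \<in> X" using X by (simp add: subspace_0)
  have f0: "f 0 = 0" using functional_zero f X by blast
  have "\<bar>f 0\<bar> \<le> fnorm_on X f" unfolding fnorm_on_def
    by (rule cSup_upper[OF _ bdd]) (use z0 in auto)
  then show nn: "0 \<le> fnorm_on X f" using f0 by simp
  show "\<bar>f x\<bar> \<le> fnorm_on X f * norm x"
  proof (cases "x = 0")
    case True then show ?thesis using f0 by simp
  next
    case False
    let ?z = "(1 / norm x) *\<^sub>R x"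
    have zX: "?z \<in> X" using X x by (simp add: subspace_scale)
    have nz: "norm ?z \<le> 1" using False by simp
    have "\<bar>f ?z\<bar> \<le> fnorm_on X f" unfolding fnorm_on_def
      by (rule cSup_upper[OF _ bdd]) (use zX nz in auto)
    moreover have "f ?z = (1 / norm x) * f x" using f x unfolding functional_on_def by blast
    ultimately have "\<bar>f x\<bar> / norm x \<le> fnorm_on X f" by (simp add: abs_mult)
    then show ?thesis using False by (simp add: divide_le_eq mult.commute)
  qed
qed

lemma right_deriv_bound:
  fixes x0 h :: "'a::real_normed_vector"
  assumes D: "((\<lambda>t. norm (x0 + t *\<^sub>R h)) has_real_derivative D) (at 0)"
    and c: "\<forall>t>0. norm x0 + t * c \<le> norm (x0 + t *\<^sub>R h)"
  shows "c \<le> D"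
proof -
  have "((\<lambda>t. (norm (x0 + t *\<^sub>R h) - norm (x0 + 0 *\<^sub>R h)) / (t - 0)) \<longlongrightarrow> D) (at 0)"
    using D by (simp add: has_field_derivative_iff)
  then have T: "((\<lambda>t. (norm (x0 + t *\<^sub>R h) - norm x0) / t) \<longlongrightarrow> D) (at_right 0)"
    by (simp add: filterlim_at_split)
  have "\<forall>\<^sub>F t in at_right (0::real). c \<le> (norm (x0 + t *\<^sub>R h) - norm x0) / t"
    using eventually_at_right_less[of 0]
  proof (rule eventually_mono)
    fix t :: real assume "0 < t"
    moreover from c \<open>0 < t\<close> have "norm x0 + t * c \<le> norm (x0 + t *\<^sub>R h)" by blast
    ultimately show "c \<le> (norm (x0 + t *\<^sub>R h) - norm x0) / t"
      by (simp add: le_divide_eq algebra_simps)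
  qed
  then show ?thesis
    by (rule tendsto_lowerbound[OF T]) simp
qed

lemma deriv_abs_bound:
  fixes x0 h :: "'a::real_normed_vector"
  assumes D: "((\<lambda>t. norm (x0 + t *\<^sub>R h)) has_real_derivative D) (at 0)"
  shows "\<bar>D\<bar> \<le> norm h"
proof -
  have "((\<lambda>t. (norm (x0 + t *\<^sub>R h) - norm (x0 + 0 *\<^sub>R h)) / (t - 0)) \<longlongrightarrow> D) (at 0)"
    using D by (simp add: has_field_derivative_iff)
  then have T0: "((\<lambda>t. (norm (x0 + t *\<^sub>R h) - norm x0) / t) \<longlongrightarrow> D) (at 0)"
    by simp
  have T: "((\<lambda>t. \<bar>(norm (x0 + t *\<^sub>R h) - norm x0) / t\<bar>) \<longlongrightarrow> \<bar>D\<bar>) (at 0)"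
    using tendsto_rabs[OF T0] .
  have "\<forall>\<^sub>F t in at (0::real). \<bar>(norm (x0 + t *\<^sub>R h) - norm x0) / t\<bar> \<le> norm h"
  proof (rule always_eventually, rule allI)
    fix t :: real
    have "\<bar>norm (x0 + t *\<^sub>R h) - norm x0\<bar> \<le> norm (t *\<^sub>R h)"
      by (metis add_diff_cancel_left' norm_triangle_ineq3)
    then have "\<bar>norm (x0 + t *\<^sub>R h) - norm x0\<bar> \<le> \<bar>t\<bar> * norm h" by simp
    then show "\<bar>(norm (x0 + t *\<^sub>R h) - norm x0) / t\<bar> \<le> norm h"
      by (cases "t = 0") (auto simp: abs_divide divide_le_eq mult.commute)
  qed
  then show ?thesis
    by (rule tendsto_upperbound[OF T]) simp
qed

lemma forward:
  fixes X :: "'a::real_normed_vector set"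
  assumes G: "\<forall>y::'a. y \<noteq> 0 \<longrightarrow> gateaux_differentiable_at norm y"
    and X: "subspace X"
  shows "property_wU X"
  unfolding property_wU_def
proof (intro allI impI, elim conjE)
  fix f assume f: "functional_on X f" and na: "norm_attaining_on X f"
  define M where "M = fnorm_on X f"
  obtain x0 where x0: "x0 \<in> X" "norm x0 = 1" "f x0 = M"
    using na unfolding norm_attaining_on_def M_def by blast
  have x0nz: "x0 \<noteq> 0" using x0 by auto
  obtain L where L: "bounded_linear L" and Ld: "\<And>h. ((\<lambda>t. norm (x0 + t *\<^sub>R h)) has_real_derivative L h) (at 0)"
    using G x0nz unfolding gateaux_differentiable_at_def by blast
  have lin: "linear L" using L bounded_linear.linear by blast
  have Lb: "\<bar>L h\<bar> \<le> norm h" for h using deriv_abs_bound[OF Ld] .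
  have Lx0: "L x0 = 1"
  proof -
    have "1 \<le> L x0"
    proof (rule right_deriv_bound[OF Ld], intro allI impI)
      fix t :: real assume "0 < t"
      have "x0 + t *\<^sub>R x0 = (1 + t) *\<^sub>R x0" by (simp add: algebra_simps)
      then show "norm x0 + t * 1 \<le> norm (x0 + t *\<^sub>R x0)" using x0 \<open>0 < t\<close> by simp
    qed
    moreover have "L x0 \<le> 1" using Lb[of x0] x0 by simp
    ultimately show ?thesis by simp
  qed
  have supp: "\<forall>x\<in>S. \<phi> x = L x"
    if S: "subspace S" "x0 \<in> S" and le: "\<forall>x\<in>S. \<phi> x \<le> norm x" and p0: "\<phi> x0 = 1"
      and padd: "\<forall>x\<in>S. \<forall>t. \<phi> (x0 + t *\<^sub>R x) = 1 + t * \<phi> x"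
      and pneg: "\<forall>x\<in>S. \<phi> (- x) = - \<phi> x" for S \<phi>
  proof
    fix x assume xS: "x \<in> S"
    have A: "\<phi> z \<le> L z" if zS: "z \<in> S" for z
    proof (rule right_deriv_bound[OF Ld], intro allI impI)
      fix t :: real assume "0 < t"
      have "x0 + t *\<^sub>R z \<in> S" using S zS by (simp add: subspace_add subspace_scale)
      then have "\<phi> (x0 + t *\<^sub>R z) \<le> norm (x0 + t *\<^sub>R z)" using le by blast
      then show "norm x0 + t * \<phi> z \<le> norm (x0 + t *\<^sub>R z)" using padd zS x0 by simp
    qed
    have "\<phi> x \<le> L x" using A xS .
    moreover have "\<phi> (- x) \<le> L (- x)" using A S xS by (simp add: subspace_neg)
    then have "- \<phi> x \<le> - L x" using pneg xS linear_neg[OF lin] by simp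
    ultimately show "\<phi> x = L x" by simp
  qed
  have fb: "\<bar>f x\<bar> \<le> M * norm x" if "x \<in> X" for x using fnorm_bound[OF f X that] M_def by simp
  have M0: "0 \<le> M" using fnorm_bound[OF f X x0(1)] M_def by simp
  have fadd: "f (x + z) = f x + f z" if "x \<in> X" "z \<in> X" for x z
    using f that unfolding functional_on_def by blast
  have fsc: "f (c *\<^sub>R x) = c * f x" if "x \<in> X" for x c
    using f that unfolding functional_on_def by blast
  have onL: "onorm L = 1"
  proof -
    have "onorm L \<le> 1" by (rule onorm_bound) (use Lb in auto)
    moreover have "norm (L x0) \<le> onorm L * norm x0" by (rule onorm[OF L])
    ultimately show ?thesis using Lx0 x0 by simp
  qed
  define g0 where "g0 = (\<lambda>x. M *\<^sub>R L x)"
  have g0bl: "bounded_linear g0" unfolding g0_def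
    using bounded_linear_compose[OF bounded_linear_mult_right L] by simp
  have ex: "g0 \<in> HB_extensions X f"
    unfolding HB_extensions_def
  proof (intro CollectI conjI ballI)
    show "bounded_linear g0" by (rule g0bl)
    have "onorm (\<lambda>x. M *\<^sub>R L x) = \<bar>M\<bar> * onorm L" by (rule onorm_scaleR[OF L])
    then show "onorm g0 = fnorm_on X f" unfolding g0_def
      using onL M0 M_def by simp
    fix x assume xX: "x \<in> X"
    show "g0 x = f x"
    proof (cases "M = 0")
      case True then show ?thesis using fb[OF xX] by (simp add: g0_def)
    next
      case False
      then have Mp: "M > 0" using M0 by simp
      have "\<forall>x\<in>X. f x / M = L x"
      proof (rule supp[OF X x0(1)])
        show "\<forall>x\<in>X. f x / M \<le> norm x"
          using fb Mp by (auto simp: divide_le_eq mult.commute intro: order_trans[OF abs_ge_self])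
        show "f x0 / M = 1" using x0 Mp by simp
        show "\<forall>x\<in>X. \<forall>t. f (x0 + t *\<^sub>R x) / M = 1 + t * (f x / M)"
          using x0 Mp fadd fsc X by (simp add: subspace_scale add_divide_distrib)
        show "\<forall>x\<in>X. f (- x) / M = - (f x / M)"
          using fsc[of _ "-1"] by simp
      qed
      then show ?thesis using xX Mp by (simp add: g0_def field_simps)
    qed
  qed
  have uniq: "g = g0" if g: "g \<in> HB_extensions X f" for g
  proof -
    have gbl: "bounded_linear g" and gX: "\<forall>x\<in>X. g x = f x" and gn: "onorm g = M"
      using g unfolding HB_extensions_def M_def by auto
    have glin: "linear g" using gbl bounded_linear.linear by blast
    show ?thesis
    proof (cases "M = 0")
      case True
      then have "\<forall>x. g x = 0" using onorm_eq_0[OF gbl] gn by simp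
      then show ?thesis using True by (auto simp: g0_def)
    next
      case False
      then have Mp: "M > 0" using M0 by simp
      have "\<forall>x\<in>UNIV. g x / M = L x"
      proof (rule supp)
        show "subspace (UNIV :: 'a set)" by (rule subspace_UNIV)
        show "x0 \<in> UNIV" by simp
        show "\<forall>x\<in>UNIV. g x / M \<le> norm x"
        proof
          fix x :: 'a
          have "g x \<le> M * norm x" using onorm[OF gbl, of x] gn by simp
          then show "g x / M \<le> norm x" using Mp by (simp add: divide_le_eq mult.commute)
        qed
        show "g x0 / M = 1" using x0 gX Mp by simp
        show "\<forall>x\<in>UNIV. \<forall>t. g (x0 + t *\<^sub>R x) / M = 1 + t * (g x / M)"
          using x0 gX Mp linear_add[OF glin] linear_scale[OF glin] by (simp add: add_divide_distrib)
        show "\<forall>x\<in>UNIV. g (- x) / M = - (g x / M)"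
          using linear_neg[OF glin] by simp
      qed
      then show ?thesis using Mp by (auto simp: g0_def field_simps)
    qed
  qed
  show "\<exists>!g. g \<in> HB_extensions X f" using ex uniq by blast
qed
lemma fnorm_one:
  assumes "\<forall>x\<in>X. \<bar>f x\<bar> \<le> norm x" "x1 \<in> X" "norm x1 = 1" "f x1 = 1"
  shows "fnorm_on X f = 1"
  unfolding fnorm_on_def
proof (rule cSup_eq_maximum)
  show "1 \<in> (\<lambda>x. \<bar>f x\<bar>) ` {x \<in> X. norm x \<le> 1}" using assms by force
  fix z assume "z \<in> (\<lambda>x. \<bar>f x\<bar>) ` {x \<in> X. norm x \<le> 1}"
  then show "z \<le> 1" using assms(1) by force
qed

lemma closed_range_pair:
  fixes y h :: "'a::real_normed_vector"
  assumes inj: "\<And>a b. a *\<^sub>R y + b *\<^sub>R h = 0 \<Longrightarrow> a = 0 \<and> b = 0"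
  shows "closed (range (\<lambda>p::real\<times>real. fst p *\<^sub>R y + snd p *\<^sub>R h))"
proof -
  define F where "F = (\<lambda>p::real\<times>real. fst p *\<^sub>R y + snd p *\<^sub>R h)"
  have lin: "linear F" unfolding F_def
    by (rule linearI) (auto simp: algebra_simps)
  then have bl: "bounded_linear F" using linear_conv_bounded_linear by blast
  have cont: "continuous_on (sphere 0 1) (\<lambda>p. norm (F p))"
    by (intro continuous_intros linear_continuous_on bl)
  have "(1, 0) \<in> sphere (0::real\<times>real) 1" by (simp add: norm_Pair)
  then have ne: "sphere (0::real\<times>real) 1 \<noteq> {}" by blast
  obtain p0 where p0: "p0 \<in> sphere 0 1" and p0m: "\<forall>p\<in>sphere 0 1. norm (F p0) \<le> norm (F p)"
    using continuous_attains_inf[OF compact_sphere ne cont] by blast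
  define e where "e = norm (F p0)"
  have "p0 \<noteq> 0" using p0 by auto
  then have "F p0 \<noteq> 0" using inj unfolding F_def by (metis prod_eq_iff fst_zero snd_zero)
  then have e0: "e > 0" unfolding e_def by simp
  have normf: "\<forall>x\<in>UNIV. e * norm x \<le> norm (F x)"
  proof
    fix p :: "real \<times> real"
    show "e * norm p \<le> norm (F p)"
    proof (cases "p = 0")
      case True then show ?thesis using linear_0[OF lin] by simp
    next
      case False
      define q where "q = (1 / norm p) *\<^sub>R p"
      have q: "q \<in> sphere 0 1" using False unfolding q_def by simp
      have "F p = norm p *\<^sub>R F q" unfolding q_def using False linear_scale[OF lin] by simp
      then have "norm (F p) = norm p * norm (F q)" by simp
      moreover have "e \<le> norm (F q)" using p0m q unfolding e_def by blast
      ultimately show ?thesis by (metis mult.commute mult_left_mono norm_ge_zero)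
    qed
  qed
  have "complete (F ` UNIV)"
    by (rule complete_isometric_image[OF e0 subspace_UNIV bl normf complete_UNIV])
  then show ?thesis using complete_imp_closed unfolding F_def by blast
qed

lemma quot_mono:
  fixes y h :: "'a::real_normed_vector"
  assumes "0 < s" "s \<le> t"
  shows "(norm (y + s *\<^sub>R h) - norm y) / s \<le> (norm (y + t *\<^sub>R h) - norm y) / t"
proof -
  have t0: "0 < t" using assms by simp
  have "y + s *\<^sub>R h = (1 - s / t) *\<^sub>R y + (s / t) *\<^sub>R (y + t *\<^sub>R h)"
    using t0 by (simp add: algebra_simps)
  then have "norm (y + s *\<^sub>R h) \<le> norm ((1 - s / t) *\<^sub>R y) + norm ((s / t) *\<^sub>R (y + t *\<^sub>R h))"
    by (metis norm_triangle_ineq)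
  also have "\<dots> = (1 - s / t) * norm y + (s / t) * norm (y + t *\<^sub>R h)"
    using assms t0 by simp
  finally have "norm (y + s *\<^sub>R h) - norm y \<le> (s / t) * (norm (y + t *\<^sub>R h) - norm y)"
    by (simp add: algebra_simps)
  then have "norm (y + s *\<^sub>R h) - norm y \<le> ((norm (y + t *\<^sub>R h) - norm y) / t) * s"
    by (simp add: field_simps)
  then show ?thesis using pos_divide_le_eq[OF assms(1)] by blast
qed

lemma backward:
  fixes y :: "'a::real_normed_vector"
  assumes W: "\<forall>X::'a set. subspace X \<and> closed X \<longrightarrow> property_wU X" and y0: "y \<noteq> 0"
  shows "gateaux_differentiable_at norm y"
proof -
  define S1 where "S1 = range (\<lambda>k::real. k *\<^sub>R y)"
  have S1sub: "subspace S1" unfolding S1_def using subspace_span[of "{y}"] span_singleton by metis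
  have S1cl: "closed S1"
  proof -
    have "complete ((\<lambda>k::real. k *\<^sub>R y) ` UNIV)"
      by (rule complete_isometric_image[of "norm y"])
         (use y0 in \<open>auto simp: subspace_UNIV bounded_linear_scaleR_left complete_UNIV\<close>)
    then show ?thesis unfolding S1_def using complete_imp_closed by blast
  qed
  define cf where "cf x = (THE k. x = k *\<^sub>R y)" for x
  have cf: "cf (k *\<^sub>R y) = k" for k unfolding cf_def
    by (rule the_equality) (use y0 in auto)
  define f1 where "f1 x = cf x * norm y" for x
  have f1k: "f1 (k *\<^sub>R y) = k * norm y" for k using cf f1_def by simp
  have f1abs: "\<forall>x\<in>S1. \<bar>f1 x\<bar> \<le> norm x" unfolding S1_def using f1k by (auto simp: abs_mult)
  have f1fun: "functional_on S1 f1"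
    unfolding functional_on_def
  proof (intro conjI ballI allI)
    fix x z assume "x \<in> S1" "z \<in> S1"
    then obtain a b where ab: "x = a *\<^sub>R y" "z = b *\<^sub>R y" unfolding S1_def by auto
    then have "x + z = (a + b) *\<^sub>R y" by (simp add: algebra_simps)
    then have "f1 (x + z) = (a + b) * norm y" using f1k by metis
    then show "f1 (x + z) = f1 x + f1 z" using f1k ab by (simp add: algebra_simps)
  next
    fix c x assume "x \<in> S1"
    then obtain a where a: "x = a *\<^sub>R y" unfolding S1_def by auto
    then have "c *\<^sub>R x = (c * a) *\<^sub>R y" by simp
    then show "f1 (c *\<^sub>R x) = c * f1 x" using f1k a by simp
  next
    show "\<exists>K. \<forall>x\<in>S1. \<bar>f1 x\<bar> \<le> K * norm x" using f1abs by (intro exI[of _ 1]) simp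
  qed
  define x1 where "x1 = (1 / norm y) *\<^sub>R y"
  have x1: "x1 \<in> S1" "norm x1 = 1" "f1 x1 = 1" using y0 f1k unfolding x1_def S1_def by auto
  have fn1: "fnorm_on S1 f1 = 1" by (rule fnorm_one[OF f1abs x1])
  have na1: "norm_attaining_on S1 f1" unfolding norm_attaining_on_def using x1 fn1 by auto
  have ex1: "\<exists>!g. g \<in> HB_extensions S1 f1" using W S1sub S1cl f1fun na1 unfolding property_wU_def by blast
  then obtain g where gHB: "g \<in> HB_extensions S1 f1" by blast
  have gbl: "bounded_linear g" and gS1: "\<forall>x\<in>S1. g x = f1 x" and gn: "onorm g = 1"
    using gHB fn1 unfolding HB_extensions_def by auto
  have glin: "linear g" using gbl bounded_linear.linear by blast
  have gb: "\<bar>g x\<bar> \<le> norm x" for x using onorm[OF gbl, of x] gn by simp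
  have gk: "g (k *\<^sub>R y) = k * norm y" for k using gS1 f1k unfolding S1_def by auto
  have lower: "norm y + t * g h \<le> norm (y + t *\<^sub>R h)" for t h
  proof -
    have "g (y + t *\<^sub>R h) = norm y + t * g h"
      using gk[of 1] linear_add[OF glin] linear_scale[OF glin] by simp
    then show ?thesis using gb[of "y + t *\<^sub>R h"] by simp
  qed
  have gneg: "g (- h) = - g h" for h using linear_neg[OF glin] .
  have key: "\<exists>t>0. norm (y + t *\<^sub>R h) < norm y + t * c" if ch: "g h < c" for h c
  proof (rule ccontr)
    assume "\<not> ?thesis"
    then have A: "\<forall>t>0. norm y + t * c \<le> norm (y + t *\<^sub>R h)" by (meson not_le)
    show False
    proof (cases "h \<in> S1")
      case True
      then obtain k where hk: "h = k *\<^sub>R y" unfolding S1_def by auto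
      define t where "t = 1 / (\<bar>k\<bar> + 1)"
      have t0: "t > 0" unfolding t_def by simp
      have tk: "1 + t * k > 0"
      proof -
        have "\<bar>t * k\<bar> < 1" unfolding t_def by (simp add: abs_mult field_simps)
        then show ?thesis by (simp add: abs_less_iff)
      qed
      have "y + t *\<^sub>R h = (1 + t * k) *\<^sub>R y" using hk by (simp add: algebra_simps)
      then have "norm (y + t *\<^sub>R h) = (1 + t * k) * norm y" using tk by simp
      with A t0 have "norm y + t * c \<le> (1 + t * k) * norm y" by auto
      then have "t * c \<le> t * (k * norm y)" by (simp add: algebra_simps)
      then have "c \<le> k * norm y" using t0 by simp
      moreover have "g h = k * norm y" using hk gk by simp
      ultimately show False using ch by simp
    next
      case False
      define F where "F = (\<lambda>p::real\<times>real. fst p *\<^sub>R y + snd p *\<^sub>R h)"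
      have injF: "a = 0 \<and> b = 0" if ab: "a *\<^sub>R y + b *\<^sub>R h = 0" for a b
      proof -
        have b0: "b = 0"
        proof (rule ccontr)
          assume bn: "b \<noteq> 0"
          have "b *\<^sub>R h = - (a *\<^sub>R y)" using ab by (simp add: eq_neg_iff_add_eq_0 add.commute)
          then have "(1 / b) *\<^sub>R (b *\<^sub>R h) = (- a / b) *\<^sub>R y" by simp
          then have "h = (- a / b) *\<^sub>R y" using bn by simp
          then have "h \<in> S1" unfolding S1_def by blast
          with False show False by simp
        qed
        then have "a *\<^sub>R y = 0" using ab by simp
        then show ?thesis using y0 b0 by simp
      qed
      have S2cl: "closed (range F)" unfolding F_def by (rule closed_range_pair) (rule injF)
      have linF: "linear F" unfolding F_def by (rule linearI) (auto simp: algebra_simps)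
      have S2sub: "subspace (range F)"
        unfolding subspace_def
      proof (intro conjI ballI allI)
        show "0 \<in> range F" using linear_0[OF linF] by (metis rangeI)
        fix x z assume "x \<in> range F" "z \<in> range F"
        then obtain p q where "x = F p" "z = F q" by auto
        then show "x + z \<in> range F" using linear_add[OF linF, of p q] by (metis rangeI)
      next
        fix k x assume "x \<in> range F"
        then obtain p where "x = F p" by auto
        then show "k *\<^sub>R x \<in> range F" using linear_scale[OF linF, of k p] by (metis rangeI)
      qed
      have Finj: "p = q" if "F p = F q" for p q
      proof -
        have "F (p - q) = 0" using that linear_diff[OF linF] by simp
        then have "fst (p - q) = 0 \<and> snd (p - q) = 0" using injF unfolding F_def by blast
        then show ?thesis by (simp add: prod_eq_iff)
      qed
      define cd where "cd x = (THE p. x = F p)" for x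
      have cd: "cd (F p) = p" for p unfolding cd_def by (rule the_equality) (auto dest: Finj)
      define \<phi> where "\<phi> x = fst (cd x) * norm y + snd (cd x) * c" for x
      have \<phi>F: "\<phi> (F p) = fst p * norm y + snd p * c" for p using cd \<phi>_def by simp
      have cle: "c \<le> norm h" using A[rule_format, of 1] norm_triangle_ineq[of y h] by simp
      have cge: "- norm h \<le> c" using gb[of h] ch by (simp add: abs_le_iff)
      have main: "a * norm y + b * c \<le> norm (a *\<^sub>R y + b *\<^sub>R h)" for a b
      proof (cases "a > 0")
        case True
        define u where "u = b / a"
        have "norm y + u * c \<le> norm (y + u *\<^sub>R h)"
        proof (cases "u > 0")
          case True then show ?thesis using A by blast
        next
          case False
          then have "u * c \<le> u * g h" using ch by (simp add: mult_left_mono_neg)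
          then show ?thesis using lower[of u h] by linarith
        qed
        then have "a * (norm y + u * c) \<le> a * norm (y + u *\<^sub>R h)" using True by (simp add: mult_left_mono)
        moreover have "a *\<^sub>R (y + u *\<^sub>R h) = a *\<^sub>R y + b *\<^sub>R h" using True unfolding u_def by (simp add: algebra_simps)
        moreover have "a * (norm y + u * c) = a * norm y + b * c" using True unfolding u_def by (simp add: field_simps)
        moreover have "norm (a *\<^sub>R (y + u *\<^sub>R h)) = a * norm (y + u *\<^sub>R h)" using True by simp
        ultimately show ?thesis by simp
      next
        case False
        have "norm (b *\<^sub>R h) - norm (a *\<^sub>R y) \<le> norm (b *\<^sub>R h + a *\<^sub>R y)" by (rule norm_diff_ineq)
        then have "\<bar>b\<bar> * norm h + a * norm y \<le> norm (a *\<^sub>R y + b *\<^sub>R h)" using False by (simp add: add.commute)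
        moreover have "b * c \<le> \<bar>b\<bar> * norm h"
        proof (cases "b \<ge> 0")
          case True then show ?thesis using cle by (simp add: mult_left_mono)
        next
          case False
          then have "b * c \<le> b * (- norm h)" using cge by (intro mult_left_mono_neg) auto
          then show ?thesis using False by simp
        qed
        ultimately show ?thesis by linarith
      qed
      have \<phi>abs: "\<forall>x\<in>range F. \<bar>\<phi> x\<bar> \<le> norm x"
      proof
        fix x assume "x \<in> range F"
        then obtain a b where x: "x = F (a, b)" by auto
        have Fab: "F (a, b) = a *\<^sub>R y + b *\<^sub>R h" unfolding F_def by simp
        have px: "\<phi> x = a * norm y + b * c" using x \<phi>F[of "(a, b)"] by simp
        have "\<phi> x \<le> norm x" using main[of a b] x Fab px by simp
        moreover have "(- a) *\<^sub>R y + (- b) *\<^sub>R h = - (a *\<^sub>R y + b *\<^sub>R h)" by (simp add: algebra_simps)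
        then have "norm ((- a) *\<^sub>R y + (- b) *\<^sub>R h) = norm x" using x Fab by (simp only: norm_minus_cancel)
        then have "- \<phi> x \<le> norm x" using main[of "-a" "-b"] px by simp
        ultimately show "\<bar>\<phi> x\<bar> \<le> norm x" by simp
      qed
      have \<phi>fun: "functional_on (range F) \<phi>"
        unfolding functional_on_def
      proof (intro conjI ballI allI)
        fix x z assume "x \<in> range F" "z \<in> range F"
        then obtain p q where "x = F p" "z = F q" by auto
        then show "\<phi> (x + z) = \<phi> x + \<phi> z" using linear_add[OF linF, of p q, symmetric] \<phi>F by (simp add: algebra_simps)
      next
        fix k x assume "x \<in> range F"
        then obtain p where "x = F p" by auto
        then show "\<phi> (k *\<^sub>R x) = k * \<phi> x" using linear_scale[OF linF, of k p, symmetric] \<phi>F by (simp add: algebra_simps)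
      next
        show "\<exists>K. \<forall>x\<in>range F. \<bar>\<phi> x\<bar> \<le> K * norm x" using \<phi>abs by (intro exI[of _ 1]) simp
      qed
      have x1F: "x1 = F (1 / norm y, 0)" unfolding x1_def F_def by simp
      have \<phi>x1: "\<phi> x1 = 1" using x1F \<phi>F y0 by simp
      have x1R: "x1 \<in> range F" using x1F by simp
      have fn2: "fnorm_on (range F) \<phi> = 1" by (rule fnorm_one[OF \<phi>abs x1R x1(2) \<phi>x1])
      have na2: "norm_attaining_on (range F) \<phi>" unfolding norm_attaining_on_def using fn2 x1R x1 \<phi>x1 by auto
      obtain G where GHB: "G \<in> HB_extensions (range F) \<phi>"
        using W S2sub S2cl \<phi>fun na2 unfolding property_wU_def by blast
      have Gbl: "bounded_linear G" and GF: "\<forall>x\<in>range F. G x = \<phi> x" and Gn: "onorm G = 1"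
        using GHB fn2 unfolding HB_extensions_def by auto
      have "G \<in> HB_extensions S1 f1"
        unfolding HB_extensions_def
      proof (intro CollectI conjI ballI)
        show "bounded_linear G" by (rule Gbl)
        show "onorm G = fnorm_on S1 f1" using Gn fn1 by simp
        fix x assume "x \<in> S1"
        then obtain k where k: "x = k *\<^sub>R y" unfolding S1_def by auto
        then have "x = F (k, 0)" unfolding F_def by simp
        then have "G x = k * norm y" using GF \<phi>F by simp
        then show "G x = f1 x" using k f1k by simp
      qed
      then have "G = g" using ex1 gHB by blast
      moreover have "h = F (0, 1)" unfolding F_def by simp
      then have "G h = c" using GF \<phi>F by (metis rangeI fst_conv snd_conv mult_zero_left mult_1 add_0)
      ultimately show False using ch by simp
    qed
  qed
  show ?thesis unfolding gateaux_differentiable_at_def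
  proof (intro exI conjI allI)
    show "bounded_linear g" by (rule gbl)
    fix h
    have "((\<lambda>t. (norm (y + t *\<^sub>R h) - norm y) / t) \<longlongrightarrow> g h) (at 0)"
      unfolding LIM_eq
    proof (intro allI impI)
      fix r :: real assume r: "0 < r"
      obtain t1 where t1: "t1 > 0" "norm (y + t1 *\<^sub>R h) < norm y + t1 * (g h + r)"
        using key[of h "g h + r"] r by auto
      obtain t2 where t2: "t2 > 0" "norm (y + t2 *\<^sub>R (- h)) < norm y + t2 * (g (- h) + r)"
        using key[of "- h" "g (- h) + r"] r by auto
      show "\<exists>s>0. \<forall>x. x \<noteq> 0 \<and> norm (x - 0) < s \<longrightarrow> norm ((norm (y + x *\<^sub>R h) - norm y) / x - g h) < r"
      proof (intro exI[of _ "min t1 t2"] conjI allI impI)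
        show "0 < min t1 t2" using t1 t2 by simp
        fix x :: real assume x: "x \<noteq> 0 \<and> norm (x - 0) < min t1 t2"
        show "norm ((norm (y + x *\<^sub>R h) - norm y) / x - g h) < r"
        proof (cases "x > 0")
          case True
          have lo: "g h \<le> (norm (y + x *\<^sub>R h) - norm y) / x"
            using lower[of x h] True by (simp add: le_divide_eq algebra_simps)
          have "(norm (y + x *\<^sub>R h) - norm y) / x \<le> (norm (y + t1 *\<^sub>R h) - norm y) / t1"
            using quot_mono[of x t1 y h] True x by simp
          also have "\<dots> < g h + r" using t1 by (simp add: divide_less_eq algebra_simps)
          finally show ?thesis using lo by simp
        next
          case False
          define \<tau> where "\<tau> = - x"
          have \<tau>0: "\<tau> > 0" using False x \<tau>_def by simp
          have eq: "y + x *\<^sub>R h = y + \<tau> *\<^sub>R (- h)" unfolding \<tau>_def by simp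
          have Q: "(norm (y + x *\<^sub>R h) - norm y) / x = - ((norm (y + \<tau> *\<^sub>R (- h)) - norm y) / \<tau>)"
            using eq unfolding \<tau>_def by simp
          have lo: "g (- h) \<le> (norm (y + \<tau> *\<^sub>R (- h)) - norm y) / \<tau>"
            using lower[of \<tau> "- h"] \<tau>0 by (simp add: le_divide_eq algebra_simps)
          have "(norm (y + \<tau> *\<^sub>R (- h)) - norm y) / \<tau> \<le> (norm (y + t2 *\<^sub>R (- h)) - norm y) / t2"
            using quot_mono[of \<tau> t2 y "- h"] \<tau>0 x \<tau>_def by simp
          also have "\<dots> < g (- h) + r" using t2 by (simp add: divide_less_eq algebra_simps)
          finally show ?thesis using lo Q gneg[of h] by simp
        qed
      qed
    qed
    then show "((\<lambda>t. norm (y + t *\<^sub>R h)) has_real_derivative g h) (at 0)"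
      unfolding has_field_derivative_iff by simp
  qed
qed

theorem proposition1p12:
  fixes Y :: "'a::banach itself"
  shows "(\<forall>y::'a. y \<noteq> 0 \<longrightarrow> gateaux_differentiable_at norm y) \<longleftrightarrow>
         (\<forall>X::'a set. subspace X \<and> closed X \<longrightarrow> property_wU X)"
proof
  assume L: "\<forall>y::'a. y \<noteq> 0 \<longrightarrow> gateaux_differentiable_at norm y"
  show "\<forall>X::'a set. subspace X \<and> closed X \<longrightarrow> property_wU X" using forward[OF L] by blast
next
  assume R: "\<forall>X::'a set. subspace X \<and> closed X \<longrightarrow> property_wU X"
  show "\<forall>y::'a. y \<noteq> 0 \<longrightarrow> gateaux_differentiable_at norm y" using backward[OF R] by blast
qed

end
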